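(* For every integer $j$ with $j\geq 20$ or $j\in\{15,16,17\}$, we have $R_1^{\mathcal{BIP}}(4,j)=2j-1$, where $\mathcal{BIP}$ is the class of bipartite graphs.
   Context: All graphs are finite and simple. For a graph $G$ and a nonnegative integer $k$, a $k$-sparse $j$-set is a set of $j$ vertices of $G$ inducing a subgraph of maximum degree at most $k$; a $k$-dense $i$-set is a set of $i$ vertices of $G$ that is $k$-sparse in the complement of $G$. For a graph class $\mathcal{G}$, $R_k^{\mathcal{G}}(i,j)$ is the smallest natural number $n$ such that every graph on $n$ vertices in $\mathcal{G}$ has either a $k$-dense $i$-set or a $k$-sparse $j$-set. *)

theory Defs
  imports Main
begin

definition simple_graph :: "'a set \<Rightarrow> ('a \<Rightarrow> 'a \<Rightarrow> bool) \<Rightarrow> bool" where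
  "simple_graph V E \<longleftrightarrow> finite V \<and>
     (\<forall>u v. E u v \<longrightarrow> u \<in> V \<and> v \<in> V \<and> u \<noteq> v \<and> E v u)"

definition bipartite :: "'a set \<Rightarrow> ('a \<Rightarrow> 'a \<Rightarrow> bool) \<Rightarrow> bool" where
  "bipartite V E \<longleftrightarrow> (\<exists>A. A \<subseteq> V \<and>
     (\<forall>u\<in>V. \<forall>v\<in>V. E u v \<longrightarrow> (u \<in> A \<longleftrightarrow> v \<notin> A)))"

definition compl_graph :: "'a set \<Rightarrow> ('a \<Rightarrow> 'a \<Rightarrow> bool) \<Rightarrow> ('a \<Rightarrow> 'a \<Rightarrow> bool)" where
  "compl_graph V E = (\<lambda>u v. u \<in> V \<and> v \<in> V \<and> u \<noteq> v \<and> \<not> E u v)"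

definition sparse_set :: "'a set \<Rightarrow> ('a \<Rightarrow> 'a \<Rightarrow> bool) \<Rightarrow> nat \<Rightarrow> nat \<Rightarrow> 'a set \<Rightarrow> bool" where
  "sparse_set V E k j S \<longleftrightarrow> S \<subseteq> V \<and> card S = j \<and>
     (\<forall>v\<in>S. card {u \<in> S. E v u} \<le> k)"

definition dense_set :: "'a set \<Rightarrow> ('a \<Rightarrow> 'a \<Rightarrow> bool) \<Rightarrow> nat \<Rightarrow> nat \<Rightarrow> 'a set \<Rightarrow> bool" where
  "dense_set V E k i S \<longleftrightarrow> sparse_set V (compl_graph V E) k i S"

definition R_bip :: "nat \<Rightarrow> nat \<Rightarrow> nat \<Rightarrow> nat" where
  "R_bip k i j = (LEAST n. \<forall>E :: nat \<Rightarrow> nat \<Rightarrow> bool.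
      simple_graph {..<n} E \<and> bipartite {..<n} E \<longrightarrow>
      (\<exists>S. dense_set {..<n} E k i S) \<or> (\<exists>S. sparse_set {..<n} E k j S))"

end

theory Submission
  imports Defs
begin

definition sp1 :: "(nat \<Rightarrow> nat \<Rightarrow> bool) \<Rightarrow> nat set \<Rightarrow> bool" where
  "sp1 E S \<longleftrightarrow> (\<forall>v\<in>S. card {u\<in>S. E v u} \<le> 1)"

definition c4free :: "('a \<Rightarrow> 'a \<Rightarrow> bool) \<Rightarrow> bool" where
  "c4free E \<longleftrightarrow> (\<forall>a b x y. a \<noteq> b \<longrightarrow> x \<noteq> y \<longrightarrow> E a x \<longrightarrow> E b x \<longrightarrow> E a y \<longrightarrow> E b y \<longrightarrow> False)"

lemma two_elems:
  assumes "finite A" "2 \<le> card A"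
  obtains x y where "x \<in> A" "y \<in> A" "x \<noteq> y"
proof -
  have "\<not> (\<forall>x\<in>A. \<forall>y\<in>A. x = y)"
  proof
    assume h: "\<forall>x\<in>A. \<forall>y\<in>A. x = y"
    have "card A \<le> 1" using h assms(1) card_le_Suc0_iff_eq by auto
    then show False using assms(2) by simp
  qed
  then show ?thesis using that by blast
qed

lemma no_dense:
  assumes sg: "simple_graph V E" and bp: "bipartite V E" and c4: "c4free E"
  shows "\<not> dense_set V E 1 4 S"
proof
  assume d: "dense_set V E 1 4 S"
  have SV: "S \<subseteq> V" and cS: "card S = 4"
    and cd: "\<forall>v\<in>S. card {u\<in>S. compl_graph V E v u} \<le> 1"
    using d unfolding dense_set_def sparse_set_def by auto
  have fin: "finite S" using cS by (metis card.infinite zero_neq_numeral)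
  have Esym: "\<And>u v. E u v \<Longrightarrow> E v u" and Eirr: "\<And>u v. E u v \<Longrightarrow> u \<noteq> v"
    and EV: "\<And>u v. E u v \<Longrightarrow> u \<in> V \<and> v \<in> V"
    using sg unfolding simple_graph_def by auto
  obtain A where A: "\<forall>u\<in>V. \<forall>v\<in>V. E u v \<longrightarrow> (u \<in> A \<longleftrightarrow> v \<notin> A)"
    using bp unfolding bipartite_def by auto
  have tri: "\<not> (E a x \<and> E a y \<and> E x y)" for a x y
  proof
    assume h: "E a x \<and> E a y \<and> E x y"
    then have "a \<in> V" "x \<in> V" "y \<in> V" using EV by auto
    then show False using A h by metis
  qed
  have deg: "2 \<le> card {u\<in>S. E v u}" if vS: "v \<in> S" for v
  proof -
    have "S - {v} \<subseteq> {u\<in>S. compl_graph V E v u} \<union> {u\<in>S. E v u}"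
      using SV vS unfolding compl_graph_def by auto
    then have "card (S - {v}) \<le> card ({u\<in>S. compl_graph V E v u} \<union> {u\<in>S. E v u})"
      by (intro card_mono) (use fin in auto)
    also have "\<dots> \<le> card {u\<in>S. compl_graph V E v u} + card {u\<in>S. E v u}"
      by (rule card_Un_le)
    finally have "card (S - {v}) \<le> card {u\<in>S. compl_graph V E v u} + card {u\<in>S. E v u}" .
    moreover have "card (S - {v}) = 3" using vS cS fin by (simp add: card_Diff_singleton)
    moreover have "card {u\<in>S. compl_graph V E v u} \<le> 1" using cd vS by auto
    ultimately show ?thesis by linarith
  qed
  obtain a where aS: "a \<in> S" using cS by fastforce
  obtain x y where x: "x \<in> {u\<in>S. E a u}" and y: "y \<in> {u\<in>S. E a u}" and xy: "x \<noteq> y"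
    using two_elems[OF _ deg[OF aS]] fin by auto
  have nxy: "\<not> E x y" "\<not> E y x" using tri x y Esym by blast+
  have ax: "a \<noteq> x" "a \<noteq> y" using x y Eirr by auto
  have c2: "card (S - {x, y}) = 2"
    using x y xy fin cS by (simp add: card_Diff_subset)
  have fin2: "finite (S - {x,y})" using fin by auto
  have Nx: "{u\<in>S. E x u} = S - {x,y}"
  proof (rule card_subset_eq[OF fin2])
    show "{u\<in>S. E x u} \<subseteq> S - {x,y}" using nxy Eirr by auto
    then show "card {u\<in>S. E x u} = card (S - {x,y})"
      using deg[of x] x c2 card_mono[OF fin2] by (metis (no_types, lifting) le_antisym mem_Collect_eq)
  qed
  have Ny: "{u\<in>S. E y u} = S - {x,y}"
  proof (rule card_subset_eq[OF fin2])
    show "{u\<in>S. E y u} \<subseteq> S - {x,y}" using nxy Eirr by auto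
    then show "card {u\<in>S. E y u} = card (S - {x,y})"
      using deg[of y] y c2 card_mono[OF fin2] by (metis (no_types, lifting) le_antisym mem_Collect_eq)
  qed
  have aD: "a \<in> S - {x,y}" using aS ax by auto
  obtain z where z: "z \<in> S - {x,y}" "z \<noteq> a"
    using two_elems[OF fin2] c2 aD by (metis le_refl)
  have "E x z" "E y z" using Nx Ny z by blast+
  moreover have "E x a" "E y a" using x y Esym by auto
  ultimately show False using c4 xy z(2) Esym unfolding c4free_def by metis
qed


definition good :: "nat \<Rightarrow> (nat \<Rightarrow> nat \<Rightarrow> bool) \<Rightarrow> bool" where
  "good m E \<longleftrightarrow> simple_graph {..<2*m} E \<and> bipartite {..<2*m} E \<and> c4free E \<and>
     (\<forall>S. S \<subseteq> {..<2*m} \<longrightarrow> sp1 E S \<longrightarrow> card S \<le> m)"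

definition U :: "nat \<Rightarrow> (nat \<Rightarrow> nat \<Rightarrow> bool) \<Rightarrow> (nat \<Rightarrow> nat \<Rightarrow> bool) \<Rightarrow> nat \<Rightarrow> nat \<Rightarrow> bool" where
  "U n1 E1 E2 u v \<longleftrightarrow> (u < n1 \<and> v < n1 \<and> E1 u v) \<or> (n1 \<le> u \<and> n1 \<le> v \<and> E2 (u - n1) (v - n1))"

lemma good_union:
  assumes g1: "good m1 E1" and g2: "good m2 E2"
  shows "good (m1 + m2) (U (2*m1) E1 E2)"
proof -
  define n1 where "n1 = 2*m1"
  have s1: "simple_graph {..<2*m1} E1" and b1: "bipartite {..<2*m1} E1" and c1: "c4free E1"
    and p1: "\<And>S. S \<subseteq> {..<2*m1} \<Longrightarrow> sp1 E1 S \<Longrightarrow> card S \<le> m1"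
    using g1 unfolding good_def by auto
  have s2: "simple_graph {..<2*m2} E2" and b2: "bipartite {..<2*m2} E2" and c2: "c4free E2"
    and p2: "\<And>S. S \<subseteq> {..<2*m2} \<Longrightarrow> sp1 E2 S \<Longrightarrow> card S \<le> m2"
    using g2 unfolding good_def by auto
  have E1: "\<And>u v. E1 u v \<Longrightarrow> u < n1 \<and> v < n1 \<and> u \<noteq> v \<and> E1 v u"
    using s1 unfolding simple_graph_def n1_def by auto
  have E2: "\<And>u v. E2 u v \<Longrightarrow> u < 2*m2 \<and> v < 2*m2 \<and> u \<noteq> v \<and> E2 v u"
    using s2 unfolding simple_graph_def by auto
  let ?E = "U n1 E1 E2"
  have sg: "simple_graph {..<2*(m1+m2)} ?E"
    unfolding simple_graph_def U_def
  proof (intro conjI allI impI)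
    fix u v assume h: "u < n1 \<and> v < n1 \<and> E1 u v \<or> n1 \<le> u \<and> n1 \<le> v \<and> E2 (u - n1) (v - n1)"
    then show "u \<in> {..<2 * (m1 + m2)}" "v \<in> {..<2 * (m1 + m2)}" "u \<noteq> v"
      "v < n1 \<and> u < n1 \<and> E1 v u \<or> n1 \<le> v \<and> n1 \<le> u \<and> E2 (v - n1) (u - n1)"
      using E1 E2 unfolding n1_def by (auto, (fastforce)+)
  qed simp
  obtain A1 where A1: "A1 \<subseteq> {..<2*m1}" "\<forall>u\<in>{..<2*m1}. \<forall>v\<in>{..<2*m1}. E1 u v \<longrightarrow> (u \<in> A1 \<longleftrightarrow> v \<notin> A1)"
    using b1 unfolding bipartite_def by auto
  obtain A2 where A2: "A2 \<subseteq> {..<2*m2}" "\<forall>u\<in>{..<2*m2}. \<forall>v\<in>{..<2*m2}. E2 u v \<longrightarrow> (u \<in> A2 \<longleftrightarrow> v \<notin> A2)"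
    using b2 unfolding bipartite_def by auto
  have bp: "bipartite {..<2*(m1+m2)} ?E"
    unfolding bipartite_def
  proof (intro exI[of _ "A1 \<union> {u. n1 \<le> u \<and> u - n1 \<in> A2}"] conjI ballI impI)
    show "A1 \<union> {u. n1 \<le> u \<and> u - n1 \<in> A2} \<subseteq> {..<2 * (m1 + m2)}"
      using A1(1) A2(1) unfolding n1_def by auto
  next
    fix u v assume "?E u v"
    then consider "u < n1" "v < n1" "E1 u v" | "n1 \<le> u" "n1 \<le> v" "E2 (u - n1) (v - n1)"
      unfolding U_def by auto
    then show "(u \<in> A1 \<union> {u. n1 \<le> u \<and> u - n1 \<in> A2}) = (v \<notin> A1 \<union> {u. n1 \<le> u \<and> u - n1 \<in> A2})"
    proof cases
      case 1
      have "u < 2*m1" "v < 2*m1" using E1[OF 1(3)] unfolding n1_def by auto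
      then show ?thesis using A1(2) 1 by auto
    next
      case 2
      have "u \<notin> A1" "v \<notin> A1" using 2 A1(1) unfolding n1_def by auto
      then show ?thesis using 2 A2(2) E2 by auto
    qed
  qed
  have c4: "c4free ?E"
    unfolding c4free_def
  proof (intro allI impI)
    fix a b x y assume ab: "a \<noteq> b" and xy: "x \<noteq> y" and h: "?E a x" "?E b x" "?E a y" "?E b y"
    show False
    proof (cases "a < n1")
      case True
      then have "x < n1" "y < n1" "E1 a x" "E1 a y" using h unfolding U_def by auto
      then have "E1 b x" "E1 b y" using h unfolding U_def by auto
      then show False using c1 ab xy \<open>E1 a x\<close> \<open>E1 a y\<close> unfolding c4free_def by blast
    next
      case False
      then have "n1 \<le> x" "n1 \<le> y" "E2 (a-n1) (x-n1)" "E2 (a-n1) (y-n1)" using h unfolding U_def by auto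
      then have "n1 \<le> b" "E2 (b-n1) (x-n1)" "E2 (b-n1) (y-n1)" using h unfolding U_def by auto
      moreover have "a - n1 \<noteq> b - n1" using False \<open>n1 \<le> b\<close> ab by auto
      moreover have "x - n1 \<noteq> y - n1" using \<open>n1 \<le> x\<close> \<open>n1 \<le> y\<close> xy by auto
      ultimately show False using c2 \<open>E2 (a-n1) (x-n1)\<close> \<open>E2 (a-n1) (y-n1)\<close>
        unfolding c4free_def by blast
    qed
  qed
  have sp: "card S \<le> m1 + m2" if SV: "S \<subseteq> {..<2*(m1+m2)}" and spS: "sp1 ?E S" for S
  proof -
    have finS: "finite S" using SV finite_subset by blast
    define S1 where "S1 = S \<inter> {..<n1}"
    define S2' where "S2' = S - {..<n1}"
    define S2 where "S2 = (\<lambda>u. u - n1) ` S2'"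
    have S1sp: "sp1 E1 S1" unfolding sp1_def
    proof
      fix v assume v: "v \<in> S1"
      have "{u\<in>S1. E1 v u} = {u\<in>S. ?E v u}" using v E1 unfolding S1_def U_def by auto
      then show "card {u\<in>S1. E1 v u} \<le> 1" using spS v unfolding sp1_def S1_def by auto
    qed
    have S1V: "S1 \<subseteq> {..<2*m1}" unfolding S1_def n1_def by auto
    have S2sp: "sp1 E2 S2" unfolding sp1_def
    proof
      fix v' assume "v' \<in> S2"
      then obtain v where v: "v \<in> S" "n1 \<le> v" "v' = v - n1" unfolding S2_def S2'_def by force
      have "{u'\<in>S2. E2 v' u'} \<subseteq> (\<lambda>u. u - n1) ` {u\<in>S. ?E v u}"
      proof
        fix u' assume "u' \<in> {u'\<in>S2. E2 v' u'}"
        then obtain u where "u \<in> S" "n1 \<le> u" "u' = u - n1" "E2 v' u'" unfolding S2_def S2'_def by force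
        then show "u' \<in> (\<lambda>u. u - n1) ` {u\<in>S. ?E v u}" using v unfolding U_def by auto
      qed
      then have "card {u'\<in>S2. E2 v' u'} \<le> card ((\<lambda>u. u - n1) ` {u\<in>S. ?E v u})"
        by (rule card_mono[rotated]) (use finS in auto)
      also have "\<dots> \<le> card {u\<in>S. ?E v u}" by (rule card_image_le) (use finS in auto)
      also have "\<dots> \<le> 1" using spS v unfolding sp1_def by auto
      finally show "card {u'\<in>S2. E2 v' u'} \<le> 1" .
    qed
    have S2V: "S2 \<subseteq> {..<2*m2}" using SV unfolding S2_def S2'_def n1_def by auto
    have "card S = card S1 + card S2'"
      proof -
      have "S = S1 \<union> S2'" "S1 \<inter> S2' = {}" unfolding S1_def S2'_def by auto
      then show ?thesis using finS by (metis card_Un_disjoint finite_Un)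
    qed
    also have "card S2' = card S2" unfolding S2_def
      by (rule card_image[symmetric]) (auto simp: S2'_def inj_on_def)
    finally show ?thesis using p1[OF S1V S1sp] p2[OF S2V S2sp] by linarith
  qed
  show ?thesis unfolding good_def n1_def[symmetric] using sg bp c4 sp by auto
qed
fun sing :: "nat list \<Rightarrow> nat list" where
  "sing [] = []"
| "sing (b#c) = (if (\<forall>x\<in>set c. x = b) then [b] else [])"

fun allsub2 :: "nat list list \<Rightarrow> nat \<Rightarrow> nat \<Rightarrow> nat list list \<Rightarrow> nat list \<Rightarrow> bool" where
  "allsub2 L m k cs [] = (k + length (filter (\<lambda>c. c = []) cs) + length (remdups (concat (map sing cs))) \<le> m)"
| "allsub2 L m k cs (b#bs) = (allsub2 L m (Suc k) (map2 (\<lambda>l c. if b \<in> set l then b#c else c) L cs) bs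
      \<and> allsub2 L m k cs bs)"

lemma sing_eq: "set c = {b} \<Longrightarrow> sing c = [b]"
  by (cases c) auto

lemma allsub2_sound:
  assumes "allsub2 L m k cs bs" "distinct bs" "length cs = length L"
    "\<forall>i<length L. set (cs!i) = set (L!i) \<inter> Y0" "finite Y0" "card Y0 \<le> k" "set bs \<inter> Y0 = {}"
    "Y \<subseteq> set bs"
  shows "card (Y0 \<union> Y) + card {i. i < length L \<and> set (L!i) \<inter> (Y0 \<union> Y) = {}}
     + card {b. \<exists>i<length L. set (L!i) \<inter> (Y0 \<union> Y) = {b}} \<le> m"
  using assms
proof (induction bs arbitrary: k cs Y0 Y)
  case Nil
  then have Y: "Y = {}" by auto
  have a: "card {i. i < length L \<and> set (L!i) \<inter> Y0 = {}} = length (filter (\<lambda>c. c = []) cs)"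
    unfolding length_filter_conv_card using Nil.prems(3,4) by (metis set_empty)
  have "{b. \<exists>i<length L. set (L!i) \<inter> Y0 = {b}} \<subseteq> set (remdups (concat (map sing cs)))"
  proof
    fix b assume "b \<in> {b. \<exists>i<length L. set (L!i) \<inter> Y0 = {b}}"
    then obtain i where i: "i < length L" "set (cs!i) = {b}" using Nil.prems(4) by auto
    then have "sing (cs!i) = [b]" by (rule sing_eq[OF i(2)] | simp add: sing_eq)
    moreover have "cs!i \<in> set cs" using i Nil.prems(3) by auto
    ultimately show "b \<in> set (remdups (concat (map sing cs)))" by force
  qed
  then have b: "card {b. \<exists>i<length L. set (L!i) \<inter> Y0 = {b}} \<le> length (remdups (concat (map sing cs)))"
    by (metis (no_types, lifting) List.finite_set card_mono distinct_card distinct_remdups)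
  show ?case using Nil.prems(1,6) a b Y by simp
next
  case (Cons b bs)
  show ?case
  proof (cases "b \<in> Y")
    case True
    define cs' where "cs' = map2 (\<lambda>l c. if b \<in> set l then b#c else c) L cs"
    have len: "length cs' = length L" using Cons.prems(3) unfolding cs'_def by simp
    have nth: "\<forall>i<length L. set (cs'!i) = set (L!i) \<inter> insert b Y0"
      using Cons.prems(3,4) unfolding cs'_def by auto
    have "b \<notin> Y0" using Cons.prems(7) by auto
    then have "card (insert b Y0) \<le> Suc k" using Cons.prems(5,6) by simp
    moreover have "set bs \<inter> insert b Y0 = {}" using Cons.prems(2,7) by auto
    moreover have "Y - {b} \<subseteq> set bs" using Cons.prems(8) by auto
    moreover have "allsub2 L m (Suc k) cs' bs" using Cons.prems(1) unfolding cs'_def by simp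
    ultimately have "card (insert b Y0 \<union> (Y - {b})) + card {i. i < length L \<and> set (L!i) \<inter> (insert b Y0 \<union> (Y - {b})) = {}}
     + card {b'. \<exists>i<length L. set (L!i) \<inter> (insert b Y0 \<union> (Y - {b})) = {b'}} \<le> m"
      using Cons.IH[of "Suc k" cs' "insert b Y0" "Y - {b}"] Cons.prems(2,5) len nth by auto
    moreover have "insert b Y0 \<union> (Y - {b}) = Y0 \<union> Y" using True by auto
    ultimately show ?thesis by (simp only:)
  next
    case False
    then have "Y \<subseteq> set bs" using Cons.prems(8) by auto
    moreover have "allsub2 L m k cs bs" using Cons.prems(1) by simp
    ultimately show ?thesis using Cons.IH[of k cs Y0 Y] Cons.prems by auto
  qed
qed


definition EL :: "nat list list \<Rightarrow> nat \<Rightarrow> nat \<Rightarrow> bool" where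
  "EL L u v \<longleftrightarrow> (u < length L \<and> length L \<le> v \<and> v < 2*length L \<and> v - length L \<in> set (L!u))
     \<or> (v < length L \<and> length L \<le> u \<and> u < 2*length L \<and> u - length L \<in> set (L!v))"

definition wfL :: "nat list list \<Rightarrow> bool" where
  "wfL L \<longleftrightarrow> (\<forall>l\<in>set L. \<forall>b\<in>set l. b < length L)"

definition c4L :: "nat list list \<Rightarrow> bool" where
  "c4L L \<longleftrightarrow> (\<forall>i\<in>set [0..<length L]. \<forall>k\<in>set [0..<length L]. i \<noteq> k \<longrightarrow>
      length (remdups (filter (\<lambda>b. b \<in> set (L!k)) (L!i))) \<le> 1)"

lemma c4L_D:
  assumes "c4L L" "i < length L" "k < length L" "i \<noteq> k" "p \<in> set (L!i)" "p \<in> set (L!k)"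
    "q \<in> set (L!i)" "q \<in> set (L!k)"
  shows "p = q"
proof -
  have l: "length (remdups (filter (\<lambda>b. b \<in> set (L!k)) (L!i))) \<le> 1"
    using assms(1-4) unfolding c4L_def by auto
  have e: "set (L!i) \<inter> set (L!k) = set (remdups (filter (\<lambda>b. b \<in> set (L!k)) (L!i)))" by auto
  have c1: "card (set (L!i) \<inter> set (L!k)) \<le> 1"
    using card_length[of "remdups (filter (\<lambda>b. b \<in> set (L!k)) (L!i))"] l unfolding e by linarith
  have "card {p,q} \<le> card (set (L!i) \<inter> set (L!k))" by (intro card_mono) (use assms in auto)
  then have "card {p,q} \<le> 1" using c1 by linarith
  then show ?thesis by (cases "p = q") auto
qed

lemma block_good:
  assumes wf: "wfL L" and c4: "c4L L" and chk: "allsub2 L (length L) 0 (map (\<lambda>_. []) L) [0..<length L]"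
  shows "good (length L) (EL L)"
proof -
  define m where "m = length L"
  have wf': "\<And>i b. i < m \<Longrightarrow> b \<in> set (L!i) \<Longrightarrow> b < m" using wf unfolding wfL_def m_def by auto
  have sg: "simple_graph {..<2*m} (EL L)"
    unfolding simple_graph_def EL_def m_def[symmetric] by auto
  have bp: "bipartite {..<2*m} (EL L)"
    unfolding bipartite_def
    by (rule exI[of _ "{..<m}"]) (auto simp: EL_def m_def)
  have c4f: "c4free (EL L)"
    unfolding c4free_def
  proof (intro allI impI)
    fix a b x y assume ab: "a \<noteq> b" and xy: "x \<noteq> y" and h: "EL L a x" "EL L b x" "EL L a y" "EL L b y"
    show False
    proof (cases "a < m")
      case True
      then have hx: "m \<le> x" "m \<le> y" "x - m \<in> set (L!a)" "y - m \<in> set (L!a)"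
        using h unfolding EL_def m_def by auto
      then have hb: "b < m" "x - m \<in> set (L!b)" "y - m \<in> set (L!b)"
        using h unfolding EL_def m_def by auto
      have "x - m = y - m" using c4L_D[OF c4 _ _ ab hx(3) hb(2) hx(4) hb(3)] True hb(1) m_def by auto
      then show False using hx xy by auto
    next
      case False
      then have hx: "x < m" "y < m" "a - m \<in> set (L!x)" "a - m \<in> set (L!y)"
        using h unfolding EL_def m_def by auto
      then have hb: "m \<le> b" "b - m \<in> set (L!x)" "b - m \<in> set (L!y)"
        using h unfolding EL_def m_def by auto
      have "a - m = b - m" using c4L_D[OF c4 _ _ xy hx(3) hx(4) hb(2) hb(3)] hx(1,2) m_def by auto
      then show False using hb False ab by auto
    qed
  qed
  have sp: "card S \<le> m" if SV: "S \<subseteq> {..<2*m}" and spS: "sp1 (EL L) S" for S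
  proof -
    have finS: "finite S" using SV finite_subset by blast
    define X where "X = S \<inter> {..<m}"
    define Y where "Y = {b. b < m \<and> b + m \<in> S}"
    define Z0 where "Z0 = {i. i < length L \<and> set (L!i) \<inter> ({} \<union> Y) = {}}"
    define P where "P = {b. \<exists>i<length L. set (L!i) \<inter> ({} \<union> Y) = {b}}"
    have main: "card ({} \<union> Y) + card Z0 + card P \<le> m"
      unfolding Z0_def P_def m_def
    proof (rule allsub2_sound[OF chk])
      show "Y \<subseteq> set [0..<length L]" unfolding Y_def m_def by auto
    qed auto
    have cS: "card S = card X + card Y"
    proof -
      have "S \<subseteq> X \<union> (\<lambda>b. b + m) ` Y"
      proof
        fix u assume u: "u \<in> S"
        show "u \<in> X \<union> (\<lambda>b. b + m) ` Y"
        proof (cases "u < m")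
          case True then show ?thesis using u unfolding X_def by auto
        next
          case False
          then have h: "u - m \<in> Y" "u = (u - m) + m" using u SV unfolding Y_def by auto
          have "u \<in> (\<lambda>b. b + m) ` Y" by (rule image_eqI[where f="\<lambda>b. b + m", OF h(2) h(1)])
          then show ?thesis by (rule UnI2)
        qed
      qed
      moreover have "X \<union> (\<lambda>b. b + m) ` Y \<subseteq> S" unfolding X_def Y_def by auto
      moreover have "X \<inter> (\<lambda>b. b + m) ` Y = {}" unfolding X_def by auto
      ultimately have e: "S = X \<union> (\<lambda>b. b + m) ` Y" and d: "X \<inter> (\<lambda>b. b + m) ` Y = {}" by auto
      have c: "card ((\<lambda>b. b + m) ` Y) = card Y" by (rule card_image) (auto simp: inj_on_def)
      have f1: "finite X" "finite ((\<lambda>b. b + m) ` Y)" using finS e by (metis finite_Un)+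
      have "card S = card (X \<union> (\<lambda>b. b + m) ` Y)" using e by simp
      also have "\<dots> = card X + card ((\<lambda>b. b + m) ` Y)" by (rule card_Un_disjoint[OF f1 d])
      finally show ?thesis using c by simp
    qed
    have nbA: "{u\<in>S. EL L a u} = (\<lambda>b. b + m) ` (set (L!a) \<inter> Y)" if "a \<in> X" for a
    proof -
      have a: "a < m" using that unfolding X_def by auto
      show ?thesis
      proof
        show "{u\<in>S. EL L a u} \<subseteq> (\<lambda>b. b + m) ` (set (L!a) \<inter> Y)"
        proof
          fix u assume "u \<in> {u\<in>S. EL L a u}"
          then have u: "u \<in> S" "m \<le> u" "u < 2*m" "u - m \<in> set (L!a)" using a unfolding EL_def m_def by auto
          then have "u - m \<in> set (L!a) \<inter> Y" unfolding Y_def by auto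
          then show "u \<in> (\<lambda>b. b + m) ` (set (L!a) \<inter> Y)" using u(2) by (metis image_eqI le_add_diff_inverse2)
        qed
        show "(\<lambda>b. b + m) ` (set (L!a) \<inter> Y) \<subseteq> {u\<in>S. EL L a u}"
          using a unfolding Y_def EL_def m_def by auto
      qed
    qed
    have degA: "card (set (L!a) \<inter> Y) \<le> 1" if "a \<in> X" for a
    proof -
      have "card (set (L!a) \<inter> Y) = card {u\<in>S. EL L a u}"
        unfolding nbA[OF that] by (rule card_image[symmetric]) (auto simp: inj_on_def)
      also have "\<dots> \<le> 1" using spS that unfolding sp1_def X_def by auto
      finally show ?thesis .
    qed
    have degB: "a = a'" if "a \<in> X" "a' \<in> X" "b \<in> Y" "b \<in> set (L!a)" "b \<in> set (L!a')" for a a' b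
    proof -
      have bm: "b < m" "b + m \<in> S" using that(3) unfolding Y_def by auto
      have "{a, a'} \<subseteq> {u\<in>S. EL L (b+m) u}"
        using that bm unfolding X_def EL_def m_def by auto
      moreover have "card {u\<in>S. EL L (b+m) u} \<le> 1" using spS bm unfolding sp1_def by auto
      moreover have "finite {u\<in>S. EL L (b+m) u}" using finS by simp
      ultimately have "card {a, a'} \<le> 1" by (meson card_mono order_trans)
      then show ?thesis by (cases "a = a'") auto
    qed
    define X1 where "X1 = {a\<in>X. set (L!a) \<inter> Y \<noteq> {}}"
    define g where "g a = the_elem (set (L!a) \<inter> Y)" for a
    have gX: "set (L!a) \<inter> Y = {g a}" if "a \<in> X1" for a
    proof -
      have ne: "set (L!a) \<inter> Y \<noteq> {}" and a1: "a \<in> X" using that unfolding X1_def by auto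
      have "card (set (L!a) \<inter> Y) \<noteq> 0" using ne by simp
      then have "card (set (L!a) \<inter> Y) = 1" using degA[OF a1] by linarith
      then obtain b where "set (L!a) \<inter> Y = {b}" by (meson card_1_singletonE)
      then show ?thesis unfolding g_def by simp
    qed
    have finX: "finite X" unfolding X_def by auto
    have "card X \<le> card (Z0 \<union> X1)"
      by (rule card_mono) (auto simp: Z0_def X1_def X_def m_def)
    also have "\<dots> \<le> card Z0 + card X1" by (rule card_Un_le)
    also have "card X1 = card (g ` X1)"
    proof (rule card_image[symmetric], rule inj_onI)
      fix a a' assume "a \<in> X1" "a' \<in> X1" "g a = g a'"
      then show "a = a'" using gX[of a] gX[of a'] degB[of a a' "g a"] unfolding X1_def by auto
    qed
    also have "card (g ` X1) \<le> card P"
    proof (rule card_mono)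
      show "finite P" by (rule finite_subset[of _ "{..<m}"]) (auto simp: P_def Y_def)
      show "g ` X1 \<subseteq> P"
      proof
        fix b assume "b \<in> g ` X1"
        then obtain a where a: "a \<in> X1" "b = g a" by auto
        then have "a < length L" "set (L!a) \<inter> ({} \<union> Y) = {b}" using gX[OF a(1)] unfolding X1_def X_def m_def by auto
        then show "b \<in> P" unfolding P_def by blast
      qed
    qed
    finally have "card X \<le> card Z0 + card P" by simp
    then show ?thesis using main cS by simp
  qed
  show ?thesis unfolding good_def m_def[symmetric] using sg bp c4f sp by auto
qed

definition L7 :: "nat list list" where
  "L7 = [[0,1,3],[1,2,4],[2,3,5],[3,4,6],[4,5,0],[5,6,1],[6,0,2]]"
definition L8 :: "nat list list" where
  "L8 = [[1, 3, 6], [0, 1, 5], [1, 2, 7], [2, 3, 4], [4, 5, 7], [2, 5, 6], [0, 4, 6], [0, 3, 7]]"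
definition L10 :: "nat list list" where
  "L10 = [[0, 5, 9], [0, 1, 4], [3, 4, 7], [1, 7, 8, 9], [2, 4, 9], [4, 6, 8], [3, 5, 8], [0, 2, 3, 6], [2, 5, 7], [1, 5, 6]]"
definition L11 :: "nat list list" where
  "L11 = [[0, 4, 6], [0, 1, 3, 7], [2, 4, 7, 9], [5, 7, 8, 10], [3, 4, 10], [6, 8, 9], [0, 2, 8], [1, 4, 8], [2, 3, 5, 6], [1, 5, 9], [1, 6, 10]]"

lemma good7: "good 7 (EL L7)"
proof -
  have "wfL L7 \<and> c4L L7" unfolding L7_def wfL_def c4L_def by code_simp
  moreover have "allsub2 L7 7 0 (map (\<lambda>_. []) L7) [0..<7]" unfolding L7_def by code_simp
  moreover have "length L7 = 7" unfolding L7_def by simp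
  ultimately show ?thesis using block_good[of L7] by simp
qed

lemma good8: "good 8 (EL L8)"
proof -
  have "wfL L8 \<and> c4L L8" unfolding L8_def wfL_def c4L_def by code_simp
  moreover have "allsub2 L8 8 0 (map (\<lambda>_. []) L8) [0..<8]" unfolding L8_def by code_simp
  moreover have "length L8 = 8" unfolding L8_def by simp
  ultimately show ?thesis using block_good[of L8] by simp
qed

lemma good10: "good 10 (EL L10)"
proof -
  have "wfL L10 \<and> c4L L10" unfolding L10_def wfL_def c4L_def by code_simp
  moreover have "allsub2 L10 10 0 (map (\<lambda>_. []) L10) [0..<10]" unfolding L10_def by code_simp
  moreover have "length L10 = 10" unfolding L10_def by simp
  ultimately show ?thesis using block_good[of L10] by simp
qed

lemma good11: "good 11 (EL L11)"
proof -
  have "wfL L11 \<and> c4L L11" unfolding L11_def wfL_def c4L_def by code_simp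
  moreover have "allsub2 L11 11 0 (map (\<lambda>_. []) L11) [0..<11]" unfolding L11_def by code_simp
  moreover have "length L11 = 11" unfolding L11_def by simp
  ultimately show ?thesis using block_good[of L11] by simp
qed

lemma good_add: "\<exists>E. good a E \<Longrightarrow> \<exists>E. good b E \<Longrightarrow> \<exists>E. good (a + b) E"
  using good_union by blast

lemma g7: "\<exists>E. good 7 E" using good7 by blast
lemma g8: "\<exists>E. good 8 E" using good8 by blast
lemma g10: "\<exists>E. good 10 E" using good10 by blast
lemma g11: "\<exists>E. good 11 E" using good11 by blast

lemma good_all: "14 \<le> m \<Longrightarrow> \<exists>E. good m E"
proof (induction m rule: less_induct)
  case (less m)
  show ?case
  proof (cases "m \<le> 20")
    case True
    then have "m = 7+7 \<or> m = 7+8 \<or> m = 8+8 \<or> m = 7+10 \<or> m = 8+10 \<or> m = 8+11 \<or> m = 10+10"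
      using less.prems by linarith
    then show ?thesis using good_add g7 g8 g10 g11 by metis
  next
    case False
    then have "\<exists>E. good (m - 7) E" using less.IH[of "m-7"] by simp
    then have "\<exists>E. good (m - 7 + 7) E" using good_add g7 by blast
    then show ?thesis using False by simp
  qed
qed

theorem theorem5p4:
  fixes j :: nat
  assumes "j \<ge> 20 \<or> j \<in> {15, 16, 17}"
  shows "R_bip 1 4 j = 2 * j - 1"
proof -
  have j15: "15 \<le> j" using assms by auto
  have "14 \<le> j - 1" using j15 by linarith
  then obtain E where g: "good (j-1) E" using good_all[of "j-1"] by blast
  have sE: "simple_graph {..<2*(j-1)} E" and bE: "bipartite {..<2*(j-1)} E" and cE: "c4free E"
    and pE: "\<And>S. S \<subseteq> {..<2*(j-1)} \<Longrightarrow> sp1 E S \<Longrightarrow> card S \<le> j - 1"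
    using g unfolding good_def by auto
  define P where "P n = (\<forall>E :: nat \<Rightarrow> nat \<Rightarrow> bool.
      simple_graph {..<n} E \<and> bipartite {..<n} E \<longrightarrow>
      (\<exists>S. dense_set {..<n} E 1 4 S) \<or> (\<exists>S. sparse_set {..<n} E 1 j S))" for n
  have R: "R_bip 1 4 j = (LEAST n. P n)" unfolding R_bip_def P_def by simp
  have up: "P (2*j - 1)" unfolding P_def
  proof (intro allI impI disjI2)
    fix F :: "nat \<Rightarrow> nat \<Rightarrow> bool"
    assume h: "simple_graph {..<2*j-1} F \<and> bipartite {..<2*j-1} F"
    obtain A where A: "A \<subseteq> {..<2*j-1}" "\<forall>u\<in>{..<2*j-1}. \<forall>v\<in>{..<2*j-1}. F u v \<longrightarrow> (u \<in> A \<longleftrightarrow> v \<notin> A)"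
      using h unfolding bipartite_def by auto
    have FV: "\<And>u v. F u v \<Longrightarrow> u \<in> {..<2*j-1} \<and> v \<in> {..<2*j-1}"
      using h unfolding simple_graph_def by blast
    have "card A + card ({..<2*j-1} - A) = 2*j - 1"
      using A(1) by (metis card_Diff_subset card_lessThan finite_lessThan finite_subset le_add_diff_inverse card_mono)
    then obtain T where T: "T \<subseteq> {..<2*j-1}" "j \<le> card T" "\<forall>u\<in>T. \<forall>v\<in>T. \<not> F u v"
    proof (cases "j \<le> card A")
      case True
      then show ?thesis using that[of A] A FV by blast
    next
      case False
      then have "j \<le> card ({..<2*j-1} - A)" using \<open>card A + _ = _\<close> by linarith
      then show ?thesis using that[of "{..<2*j-1} - A"] A FV by blast
    qed
    obtain S where S: "S \<subseteq> T" "card S = j"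
      using obtain_subset_with_card_n[OF T(2)] by blast
    have e: "{u\<in>S. F v u} = {}" if "v \<in> S" for v using T(3) S(1) that by auto
    have "\<forall>v\<in>S. card {u\<in>S. F v u} \<le> 1" using e by (simp del: Collect_empty_eq)
    then show "\<exists>S. sparse_set {..<2*j-1} F 1 j S"
      using S T(1) unfolding sparse_set_def by (intro exI[of _ S]) auto
  qed
  have low: "\<not> P n" if n: "n < 2*j - 1" for n
  proof -
    define F where "F u v = (u < n \<and> v < n \<and> E u v)" for u v
    have sF: "simple_graph {..<n} F"
      using sE unfolding simple_graph_def F_def by auto
    obtain A where A: "A \<subseteq> {..<2*(j-1)}" "\<forall>u\<in>{..<2*(j-1)}. \<forall>v\<in>{..<2*(j-1)}. E u v \<longrightarrow> (u \<in> A \<longleftrightarrow> v \<notin> A)"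
      using bE unfolding bipartite_def by auto
    have EV: "\<And>u v. E u v \<Longrightarrow> u < 2*(j-1) \<and> v < 2*(j-1)" using sE unfolding simple_graph_def by auto
    have bF: "bipartite {..<n} F"
      unfolding bipartite_def
    proof (intro exI[of _ "A \<inter> {..<n}"] conjI ballI impI)
      fix u v assume "u \<in> {..<n}" "v \<in> {..<n}" "F u v"
      then show "(u \<in> A \<inter> {..<n}) = (v \<notin> A \<inter> {..<n})" using A(2) EV unfolding F_def by auto
    qed auto
    have cF: "c4free F" using cE unfolding c4free_def F_def by blast
    have nd: "\<not> dense_set {..<n} F 1 4 S" for S by (rule no_dense[OF sF bF cF])
    have ns: "\<not> sparse_set {..<n} F 1 j S" for S
    proof
      assume "sparse_set {..<n} F 1 j S"
      then have S: "S \<subseteq> {..<n}" "card S = j" "\<forall>v\<in>S. card {u\<in>S. F v u} \<le> 1"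
        unfolding sparse_set_def by auto
      have "{u\<in>S. F v u} = {u\<in>S. E v u}" if "v \<in> S" for v using S(1) that unfolding F_def by auto
      then have "sp1 E S" using S(3) unfolding sp1_def by auto
      moreover have "S \<subseteq> {..<2*(j-1)}" using S(1) n by auto
      ultimately have "card S \<le> j - 1" by (rule pE[rotated])
      then show False using S(2) j15 by linarith
    qed
    show ?thesis unfolding P_def using sF bF nd ns by blast
  qed
  have "(LEAST n. P n) = 2*j - 1"
    by (rule Least_equality[where P=P, OF up]) (use low in \<open>meson not_less\<close>)
  then show ?thesis using R by simp
qed

end
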